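(* Let $\mathfrak h\in\mathrm{Mult}_\rho$ and let $\mathfrak n\in\mathrm{Mult}_\rho$ be admissible to $\mathfrak h$, $\mathfrak n\ne\emptyset$. Let $a$ be the smallest integer with $\mathfrak n[a]\ne\emptyset$ and let $\Delta\in\mathfrak n[a]$. If there exists a segment $\overline\Delta\in\mathfrak n[a+1]$ with $\overline\Delta\not\subset\Delta$ and $\overline\Delta\subset\Upsilon(\Delta,\mathfrak h)$, then $(\mathfrak n,\mathfrak h)$ is locally minimizable.
   Context: Segments: for integers $a\le b$, $[a,b]_\rho$ (think of the integer interval $\{a,\dots,b\}$), with $a(\Delta)=a$, $b(\Delta)=b$, and inclusion of segments as intervals. Two segments are linked if their union is a segment (an interval) and neither contains the other. A multisegment is a finite multiset of nonempty segments; $\mathrm{Mult}_\rho$ is the set of multisegments (including $\emptyset$); $+$ and $-$ denote multiset sum and difference. For $c\in\mathbb Z$, $\mathfrak m[c]$ is the submultisegment of segments $\Delta\in\mathfrak m$ with $a(\Delta)=c$. A sequence of segments $\Delta_1,\dots,\Delta_k$ is ascending if for $i<j$ either $\Delta_i,\Delta_j$ are unlinked or $a(\Delta_i)<a(\Delta_j)$. Write $[x,y]_\rho\prec^L[x',y']_\rho$ if $x<x'$, or $x=x'$ and $y<y'$. A segment $\Delta=[a,b]_\rho$ is admissible to $\mathfrak h$ if $\mathfrak h$ contains a segment $[a,c]_\rho$ with $c\ge b$. Removal process: for $\Delta=[a,b]_\rho$ admissible to $\mathfrak h$, let $\Delta_1=[a_1,b_1]_\rho$ be a shortest segment of $\mathfrak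 h$ with $a_1=a$ and $b_1\ge b$; recursively, let $\Delta_i=[a_i,b_i]_\rho$ be the $\prec^L$-minimal segment of $\mathfrak h$ with $a_{i-1}<a_i$ and $b\le b_i<b_{i-1}$, stopping when none exists; let $\Delta_1,\dots,\Delta_r$ be the segments obtained. Put $\Delta_i^{tr}=[a_{i+1},b_i]_\rho$ for $i<r$ and $\Delta_r^{tr}=[b+1,b_r]_\rho$ (possibly empty), and $\mathfrak r(\Delta,\mathfrak h)=\mathfrak h-\sum_i\Delta_i+\sum_i\Delta_i^{tr}$; also $\Upsilon(\Delta,\mathfrak h)=\Delta_1$. If $\Delta$ is not admissible, $\mathfrak r(\Delta,\mathfrak h)=\infty$, and $\mathfrak r(\Delta,\infty)=\infty$. For $\mathfrak m$ with segments in ascending order $\Delta_1,\dots,\Delta_k$, $\mathfrak r(\mathfrak m,\mathfrak h)=\mathfrak r(\Delta_k,\dots\mathfrak r(\Delta_1,\mathfrak h)\dots)$, and $\mathfrak m$ is admissible to $\mathfrak h$ if $\mathfrak r(\mathfrak m,\mathfrak h)\ne\infty$. For $\mathfrak n\ne\emptyset$ with $a$ minimal such that $\mathfrak n[a]\ne\emptyset$, enumerate $\mathfrak n[a]=\{\Delta_1,\dots,\Delta_k\}$; if $\mathfrak n[a]$ is admissible to $\mathfrak h$, put $\mathfrak r_0=\mathfrak h$, $\mathfrak r_i=\mathfrak r(\{\Delta_i,\dots,\Delta_1\},\mathfrak h)$ and $\mathfrak{fs}(\mathfrak n,\mathfrak h)=\{\Upsilon(\Delta_1,\mathfrak r_0),\dots,\Upsilon(\Delta_k,\mathfrak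 r_{k-1})\}$ (independent of the enumeration); otherwise $\mathfrak{fs}(\mathfrak n,\mathfrak h)=\emptyset$. Local minimizability: for $\mathfrak n$ admissible to $\mathfrak h$, with $a$ minimal such that $\mathfrak n[a]\ne\emptyset$, the pair $(\mathfrak n,\mathfrak h)$ is locally minimizable if there exists $\overline\Delta\in\mathfrak n[a+1]$ with $|\{\Delta\in\mathfrak n[a]:\overline\Delta\subset\Delta\}|<|\{\Delta\in\mathfrak{fs}(\mathfrak n,\mathfrak h):\overline\Delta\subset\Delta\}|$ (cardinalities counted with multiplicity). *)

theory Defs
  imports Main "HOL-Library.Multiset" "HOL-Library.Product_Lexorder"
begin

text \<open>A segment [a,b]_rho is represented by the pair (a,b) of integers (a \<le> b);
  a multisegment is a multiset of such pairs. The lexicographic order on pairs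
  (Product_Lexorder) is exactly the order \<prec>^L of the paper.\<close>

type_synonym seg = "int \<times> int"

definition is_seg :: "seg \<Rightarrow> bool" where
  "is_seg s \<longleftrightarrow> fst s \<le> snd s"

definition is_mult :: "seg multiset \<Rightarrow> bool" where
  "is_mult m \<longleftrightarrow> (\<forall>s\<in>#m. is_seg s)"

definition seg_sub :: "seg \<Rightarrow> seg \<Rightarrow> bool" where
  "seg_sub s t \<longleftrightarrow> fst t \<le> fst s \<and> snd s \<le> snd t"

definition mult_at :: "seg multiset \<Rightarrow> int \<Rightarrow> seg multiset" where
  "mult_at m c = filter_mset (\<lambda>s. fst s = c) m"

definition seg_admissible :: "seg \<Rightarrow> seg multiset \<Rightarrow> bool" where
  "seg_admissible D h \<longleftrightarrow> (\<exists>s\<in>#h. fst s = fst D \<and> snd D \<le> snd s)"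

text \<open>Upsilon(D,h) = Delta_1: a shortest segment of h starting at a(D) with end \<ge> b(D).\<close>
definition upsilon :: "seg \<Rightarrow> seg multiset \<Rightarrow> seg" where
  "upsilon D h = Min {s \<in> set_mset h. fst s = fst D \<and> snd D \<le> snd s}"

function rchain :: "seg multiset \<Rightarrow> int \<Rightarrow> seg \<Rightarrow> seg list" where
  "rchain h b p =
    (let C = {s \<in> set_mset h. fst p < fst s \<and> b \<le> snd s \<and> snd s < snd p}
     in if C = {} then [] else Min C # rchain h b (Min C))"
  by pat_completeness auto
termination
proof (relation "measure (\<lambda>(h,b,p). nat (snd p - b))", simp)
  fix h :: "seg multiset" and b :: int and p :: seg and C
  assume C: "C = {s \<in> set_mset h. fst p < fst s \<and> b \<le> snd s \<and> snd s < snd p}"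
     and ne: "C \<noteq> {}"
  have "finite C" using C by simp
  hence "Min C \<in> C" using ne by (rule Min_in)
  thus "((h, b, Min C), h, b, p) \<in> measure (\<lambda>(h,b,p). nat (snd p - b))"
    using C by auto
qed

fun trunc_list :: "int \<Rightarrow> seg list \<Rightarrow> seg list" where
  "trunc_list b [] = []"
| "trunc_list b [x] = (if b + 1 \<le> snd x then [(b + 1, snd x)] else [])"
| "trunc_list b (x # y # zs) = (fst y, snd x) # trunc_list b (y # zs)"

definition removal_segs :: "seg \<Rightarrow> seg multiset \<Rightarrow> seg list" where
  "removal_segs D h = upsilon D h # rchain h (snd D) (upsilon D h)"

text \<open>r(D,h); None stands for \<infinity>.\<close>
definition rem_seg :: "seg \<Rightarrow> seg multiset \<Rightarrow> seg multiset option" where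
  "rem_seg D h =
    (if seg_admissible D h
     then Some (h - mset (removal_segs D h) + mset (trunc_list (snd D) (removal_segs D h)))
     else None)"

text \<open>r(m,h), computing along the ascending order obtained by sorting m
  lexicographically (segments with equal start are never linked).\<close>
definition rem_mult :: "seg multiset \<Rightarrow> seg multiset \<Rightarrow> seg multiset option" where
  "rem_mult m h = fold (\<lambda>D acc. Option.bind acc (rem_seg D)) (sorted_list_of_multiset m) (Some h)"

definition mult_admissible :: "seg multiset \<Rightarrow> seg multiset \<Rightarrow> bool" where
  "mult_admissible m h \<longleftrightarrow> rem_mult m h \<noteq> None"

definition min_start :: "seg multiset \<Rightarrow> int" where
  "min_start n = Min (fst ` set_mset n)"

definition fs :: "seg multiset \<Rightarrow> seg multiset \<Rightarrow> seg multiset" where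
  "fs n h =
    (let L = sorted_list_of_multiset (mult_at n (min_start n))
     in if mult_admissible (mult_at n (min_start n)) h
        then mset (map (\<lambda>i. upsilon (L ! i) (the (rem_mult (mset (take i L)) h))) [0..<length L])
        else {#})"

definition locally_minimizable :: "seg multiset \<Rightarrow> seg multiset \<Rightarrow> bool" where
  "locally_minimizable n h \<longleftrightarrow>
    mult_admissible n h \<and>
    (\<exists>Db\<in>#mult_at n (min_start n + 1).
       size (filter_mset (\<lambda>D. seg_sub Db D) (mult_at n (min_start n)))
       < size (filter_mset (\<lambda>D. seg_sub Db D) (fs n h)))"

end

theory Submission
  imports Defs
begin

declare rchain.simps[simp del]

lemma rchain_fst: "s \<in> set (rchain h b p) \<Longrightarrow> fst p < fst s"
proof (induction h b p rule: rchain.induct)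
  case (1 h b p)
  define C where "C = {s \<in> set_mset h. fst p < fst s \<and> b \<le> snd s \<and> snd s < snd p}"
  show ?case
  proof (cases "C = {}")
    case True
    then show ?thesis using 1(2) by (simp add: rchain.simps[of h b p] C_def[symmetric])
  next
    case False
    have "finite C" unfolding C_def by simp
    hence m: "Min C \<in> C" using False by (rule Min_in)
    have "s = Min C \<or> s \<in> set (rchain h b (Min C))"
      using 1(2) False by (simp add: rchain.simps[of h b p] C_def[symmetric] Let_def)
    then show ?thesis
    proof
      assume "s = Min C" thus ?thesis using m C_def by auto
    next
      assume "s \<in> set (rchain h b (Min C))"
      hence "fst (Min C) < fst s" using 1(1)[OF refl] False C_def by auto
      thus ?thesis using m C_def by auto
    qed
  qed
qed

lemma trunc_fst: "s \<in> set (trunc_list b xs) \<Longrightarrow> fst s = b + 1 \<or> fst s \<in> fst ` set (tl xs)"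
  by (induction b xs rule: trunc_list.induct) (auto split: if_splits)

lemma upsilon_in:
  assumes "seg_admissible D h"
  shows "upsilon D h \<in># h \<and> fst (upsilon D h) = fst D \<and> snd D \<le> snd (upsilon D h)"
proof -
  let ?S = "{s \<in> set_mset h. fst s = fst D \<and> snd D \<le> snd s}"
  have "finite ?S" by simp
  moreover have "?S \<noteq> {}" using assms unfolding seg_admissible_def by auto
  ultimately have "Min ?S \<in> ?S" by (rule Min_in)
  thus ?thesis unfolding upsilon_def by auto
qed

lemma upsilon_min:
  assumes "s \<in># h" "fst s = fst D" "snd D \<le> snd s"
  shows "snd (upsilon D h) \<le> snd s"
proof -
  let ?S = "{s \<in> set_mset h. fst s = fst D \<and> snd D \<le> snd s}"
  have "finite ?S" by simp
  moreover have "s \<in> ?S" using assms by auto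
  ultimately have le: "Min ?S \<le> s" by (rule Min_le)
  have ne: "?S \<noteq> {}" using \<open>s \<in> ?S\<close> by blast
  have "Min ?S \<in> ?S" using \<open>finite ?S\<close> ne by (rule Min_in)
  thus ?thesis using le assms unfolding upsilon_def by (auto simp: less_eq_prod_def)
qed

lemma rem_seg_step:
  assumes "rem_seg D h = Some h'" "is_seg D" "s \<in># h'" "fst s = fst D"
  shows "s \<in># h"
proof -
  have adm: "seg_admissible D h" using assms(1) by (simp add: rem_seg_def split: if_splits)
  hence h': "h' = h - mset (removal_segs D h) + mset (trunc_list (snd D) (removal_segs D h))"
    using assms(1) by (simp add: rem_seg_def)
  have u: "fst (upsilon D h) = fst D" using upsilon_in[OF adm] by simp
  have "s \<notin> set (trunc_list (snd D) (removal_segs D h))"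
  proof
    assume "s \<in> set (trunc_list (snd D) (removal_segs D h))"
    from trunc_fst[OF this] show False
    proof
      assume "fst s = snd D + 1" thus False using assms(2,4) by (simp add: is_seg_def)
    next
      assume "fst s \<in> fst ` set (tl (removal_segs D h))"
      then obtain y where "y \<in> set (rchain h (snd D) (upsilon D h))" "fst s = fst y"
        by (auto simp: removal_segs_def)
      thus False using rchain_fst u assms(4) by fastforce
    qed
  qed
  hence "s \<in># h - mset (removal_segs D h)" using assms(3) h' by auto
  thus ?thesis by (rule in_diffD)
qed

abbreviation stepf :: "seg \<Rightarrow> seg multiset option \<Rightarrow> seg multiset option" where
  "stepf \<equiv> (\<lambda>D acc. Option.bind acc (rem_seg D))"

lemma fold_None: "fold stepf xs None = None"
  by (induction xs) auto

lemma fold_inv: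
  assumes "fold stepf xs (Some h) = Some r" "\<forall>x\<in>set xs. is_seg x \<and> fst x = a"
    "s \<in># r" "fst s = a"
  shows "s \<in># h"
  using assms
proof (induction xs arbitrary: h)
  case Nil
  then show ?case by simp
next
  case (Cons x xs)
  show ?case
  proof (cases "rem_seg x h")
    case None
    then show ?thesis using Cons.prems(1) by (simp add: fold_None)
  next
    case (Some h1)
    have "s \<in># h1" using Cons.IH[of h1] Cons.prems Some by simp
    thus ?thesis using rem_seg_step[OF Some] Cons.prems(2,4) by auto
  qed
qed

lemma sorted_split:
  fixes xs :: "seg list"
  assumes "sorted xs" "\<forall>x\<in>set xs. a \<le> fst x"
  shows "xs = filter (\<lambda>s. fst s = a) xs @ filter (\<lambda>s. fst s \<noteq> a) xs"
  using assms
proof (induction xs)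
  case Nil
  then show ?case by simp
next
  case (Cons x xs)
  show ?case
  proof (cases "fst x = a")
    case True
    then show ?thesis using Cons by auto
  next
    case False
    have al: "\<forall>y\<in>set xs. fst y \<noteq> a"
    proof
      fix y assume "y \<in> set xs"
      hence "x \<le> y" using Cons.prems(1) by auto
      thus "fst y \<noteq> a" using False Cons.prems(2) by (auto simp: less_eq_prod_def)
    qed
    thus ?thesis using False al by (simp add: filter_empty_conv filter_id_conv)
  qed
qed

theorem mainTheorem9:
  fixes h n :: "seg multiset" and a :: int and D :: seg
  assumes "is_mult h" and "is_mult n"
    and "mult_admissible n h" and "n \<noteq> {#}"
    and "a = min_start n"
    and "D \<in># mult_at n a"
    and "\<exists>Db\<in>#mult_at n (a + 1). \<not> seg_sub Db D \<and> seg_sub Db (upsilon D h)"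
  shows "locally_minimizable n h"
proof -
  obtain Db where Db: "Db \<in># mult_at n (a + 1)" "\<not> seg_sub Db D" "seg_sub Db (upsilon D h)"
    using assms(7) by blast
  have fDb: "fst Db = a + 1" using Db(1) by (simp add: mult_at_def)
  have fD: "fst D = a" "D \<in># n" using assms(6) by (auto simp: mult_at_def)
  have amin: "\<forall>x\<in>set_mset n. a \<le> fst x"
    using assms(5) unfolding min_start_def by (auto intro: Min_le)
  define SL where "SL = sorted_list_of_multiset n"
  define L where "L = sorted_list_of_multiset (mult_at n a)"
  have SLs: "sorted SL" and SLm: "mset SL = n" by (auto simp: SL_def)
  have Lfilt: "L = filter (\<lambda>s. fst s = a) SL"
  proof -
    have "mset (filter (\<lambda>s. fst s = a) SL) = mult_at n a" using SLm by (simp add: mult_at_def)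
    hence "L = sort (filter (\<lambda>s. fst s = a) SL)" unfolding L_def
      by (metis sorted_list_of_multiset_mset)
    thus ?thesis using SLs by (simp add: sorted_sort_id sorted_wrt_filter)
  qed
  have Ls: "sorted L" and Lm: "mset L = mult_at n a" by (auto simp: L_def)
  have Lset: "\<forall>x\<in>set L. is_seg x \<and> fst x = a"
  proof
    fix x assume "x \<in> set L"
    hence "x \<in># mult_at n a" using Lm by (metis set_mset_mset)
    thus "is_seg x \<and> fst x = a" using assms(2) by (auto simp: is_mult_def mult_at_def)
  qed
  have SLsplit: "SL = L @ filter (\<lambda>s. fst s \<noteq> a) SL"
    using sorted_split[OF SLs] amin SLm Lfilt by auto
  have foldn: "fold stepf SL (Some h) \<noteq> None"
    using assms(3) by (simp add: mult_admissible_def rem_mult_def SL_def)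
  have foldL: "fold stepf L (Some h) \<noteq> None"
  proof
    assume "fold stepf L (Some h) = None"
    hence "fold stepf SL (Some h) = None" by (subst SLsplit) (simp add: fold_None)
    thus False using foldn by simp
  qed
  have admL: "mult_admissible (mult_at n (min_start n)) h"
    using foldL by (simp add: mult_admissible_def rem_mult_def L_def[symmetric] assms(5)[symmetric])
  define F where "F i = upsilon (L ! i) (the (rem_mult (mset (take i L)) h))" for i
  have fsn: "fs n h = mset (map F [0..<length L])"
    using admL unfolding fs_def F_def by (simp add: L_def assms(5)[symmetric] Let_def)
  have keyF: "F i \<in># h \<and> fst (F i) = a \<and> snd (L ! i) \<le> snd (F i)" if i: "i < length L" for i
  proof -
    have rm: "rem_mult (mset (take i L)) h = fold stepf (take i L) (Some h)"
      using Ls by (simp add: rem_mult_def sorted_sort_id sorted_wrt_take)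
    have eq: "L = take i L @ L ! i # drop (Suc i) L" using i by (simp add: Cons_nth_drop_Suc)
    obtain r where r: "fold stepf (take i L) (Some h) = Some r"
    proof (cases "fold stepf (take i L) (Some h)")
      case None
      hence "fold stepf L (Some h) = None" by (subst eq) (simp add: fold_None)
      thus ?thesis using foldL by simp
    qed
    have "rem_seg (L ! i) r \<noteq> None"
    proof
      assume "rem_seg (L ! i) r = None"
      hence "fold stepf L (Some h) = None" using r by (subst eq) (simp add: fold_None)
      thus False using foldL by simp
    qed
    hence adm: "seg_admissible (L ! i) r" by (simp add: rem_seg_def split: if_splits)
    have Fi: "F i = upsilon (L ! i) r" using rm r by (simp add: F_def)
    have fa: "fst (L ! i) = a" using Lset i by auto
    have tk: "\<forall>x\<in>set (take i L). is_seg x \<and> fst x = a" using Lset by (auto dest: in_set_takeD)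
    from upsilon_in[OF adm] have "F i \<in># r" "fst (F i) = a" "snd (L ! i) \<le> snd (F i)"
      using Fi fa by auto
    moreover have "F i \<in># h" using fold_inv[OF r tk \<open>F i \<in># r\<close> \<open>fst (F i) = a\<close>] .
    ultimately show ?thesis by simp
  qed
  have "D \<in> set L" using fD(2) assms(6) Lm by (metis set_mset_mset)
  then obtain j where j: "j < length L" "L ! j = D" by (auto simp: in_set_conv_nth)
  have "snd (upsilon D h) \<le> snd (F j)"
    using upsilon_min[of "F j" h D] keyF[OF j(1)] j(2) fD(1) by simp
  hence PFj: "seg_sub Db (F j)" using Db(3) keyF[OF j(1)] fDb by (auto simp: seg_sub_def)
  let ?A = "{i. i < length L \<and> seg_sub Db (L ! i)}"
  let ?B = "{i. i < length L \<and> seg_sub Db (map F [0..<length L] ! i)}"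
  have sub: "?A \<subseteq> ?B"
  proof
    fix i assume "i \<in> ?A"
    hence i: "i < length L" "seg_sub Db (L ! i)" by auto
    have "seg_sub Db (F i)" using i(2) keyF[OF i(1)] fDb by (auto simp: seg_sub_def)
    thus "i \<in> ?B" using i by simp
  qed
  have "j \<in> ?B - ?A" using j PFj Db(2) by simp
  hence ps: "?A \<subset> ?B" using sub by blast
  have "card ?A < card ?B" by (rule psubset_card_mono) (auto simp: ps)
  hence "size (filter_mset (\<lambda>X. seg_sub Db X) (mult_at n (min_start n)))
       < size (filter_mset (\<lambda>X. seg_sub Db X) (fs n h))"
    unfolding fsn assms(5)[symmetric] Lm[symmetric]
    by (simp only: mset_filter[symmetric] size_mset length_filter_conv_card length_map length_upt diff_zero)
  thus ?thesis unfolding locally_minimizable_def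
    using assms(3) Db(1) assms(5) by auto
qed

end
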